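(* Let $S_n=K_{1,n}$ be a star on $n+1\ge4$ vertices. Then $\pi_T(S_n)=n+1$.
   Context: A sequence is nonrepetitive if no block of consecutive terms has the form $r_1\dots r_nr_1\dots r_n$ with $n\ge1$. A (strong) total Thue colouring of a graph $G$ is a colouring of $V(G)\cup E(G)$ such that for every path $v_1,e_1,v_2,\dots,e_{k-1},v_k$ in $G$ the sequence of colours of $v_1,e_1,\dots,v_k$ is nonrepetitive, the sequence of colours of $v_1,\dots,v_k$ is nonrepetitive, and the sequence of colours of $e_1,\dots,e_{k-1}$ is nonrepetitive. $\pi_T(G)$ is the minimum number of colours in a total Thue colouring of $G$. *)

theory Defs
  imports Main
begin

definition nonrepetitive :: "'c list \<Rightarrow> bool" where
  "nonrepetitive w \<longleftrightarrow> \<not> (\<exists>xs ys zs. ys \<noteq> [] \<and> w = xs @ ys @ ys @ zs)"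

definition is_path :: "'a set \<Rightarrow> 'a set set \<Rightarrow> 'a list \<Rightarrow> bool" where
  "is_path V E vs \<longleftrightarrow> vs \<noteq> [] \<and> distinct vs \<and> set vs \<subseteq> V \<and>
     (\<forall>i. Suc i < length vs \<longrightarrow> {vs ! i, vs ! Suc i} \<in> E)"

fun path_edges :: "'a list \<Rightarrow> 'a set list" where
  "path_edges (v # w # vs) = {v, w} # path_edges (w # vs)"
| "path_edges _ = []"

fun total_seq :: "('a \<Rightarrow> 'c) \<Rightarrow> ('a set \<Rightarrow> 'c) \<Rightarrow> 'a list \<Rightarrow> 'c list" where
  "total_seq cv ce (v # w # vs) = cv v # ce {v, w} # total_seq cv ce (w # vs)"
| "total_seq cv ce [v] = [cv v]"
| "total_seq cv ce [] = []"

definition total_thue_colouring ::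
  "'a set \<Rightarrow> 'a set set \<Rightarrow> ('a \<Rightarrow> nat) \<Rightarrow> ('a set \<Rightarrow> nat) \<Rightarrow> bool" where
  "total_thue_colouring V E cv ce \<longleftrightarrow>
     (\<forall>vs. is_path V E vs \<longrightarrow>
        nonrepetitive (total_seq cv ce vs) \<and>
        nonrepetitive (map cv vs) \<and>
        nonrepetitive (map ce (path_edges vs)))"

definition num_colours ::
  "'a set \<Rightarrow> 'a set set \<Rightarrow> ('a \<Rightarrow> nat) \<Rightarrow> ('a set \<Rightarrow> nat) \<Rightarrow> nat" where
  "num_colours V E cv ce = card (cv ` V \<union> ce ` E)"

definition pi_T :: "'a set \<Rightarrow> 'a set set \<Rightarrow> nat" where
  "pi_T V E = (LEAST k. \<exists>cv ce. total_thue_colouring V E cv ce \<and> num_colours V E cv ce = k)"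

definition star_V :: "nat \<Rightarrow> nat set" where
  "star_V n = {0..n}"

definition star_E :: "nat \<Rightarrow> nat set set" where
  "star_E n = {{0, i} | i. 1 \<le> i \<and> i \<le> n}"

end

theory Submission
  imports Defs
begin

lemma nr_sq: "nonrepetitive (xs @ ys @ ys @ zs) \<Longrightarrow> ys \<noteq> [] \<Longrightarrow> False"
  unfolding nonrepetitive_def by blast

lemma nr2: "nonrepetitive [a, b] \<Longrightarrow> a \<noteq> b"
  using nr_sq[of "[]" "[a]" "[]"] by auto

lemma nr3: "nonrepetitive [a, b, c] \<Longrightarrow> b \<noteq> c"
  using nr_sq[of "[a]" "[b]" "[]"] by auto

lemma nr0: "nonrepetitive []"
  unfolding nonrepetitive_def by auto

lemma nr1: "nonrepetitive [a]"
  unfolding nonrepetitive_def by (auto simp: Cons_eq_append_conv append_eq_Cons_conv)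

lemma nr2': "a \<noteq> b \<Longrightarrow> nonrepetitive [a, b]"
  unfolding nonrepetitive_def by (auto simp: Cons_eq_append_conv append_eq_Cons_conv)

lemma nr3': "a \<noteq> b \<Longrightarrow> b \<noteq> c \<Longrightarrow> nonrepetitive [a, b, c]"
  unfolding nonrepetitive_def by (auto simp: Cons_eq_append_conv append_eq_Cons_conv)

lemma nr5': "a \<noteq> b \<Longrightarrow> b \<noteq> c \<Longrightarrow> c \<noteq> d \<Longrightarrow> d \<noteq> e \<Longrightarrow> (a \<noteq> c \<or> b \<noteq> d)
   \<Longrightarrow> (b \<noteq> d \<or> c \<noteq> e) \<Longrightarrow> nonrepetitive [a, b, c, d, e]"
  unfolding nonrepetitive_def by (auto simp: Cons_eq_append_conv append_eq_Cons_conv)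

lemma edge_char: "{a, b} \<in> star_E n \<Longrightarrow> (a = 0 \<and> 1 \<le> b \<and> b \<le> n) \<or> (b = 0 \<and> 1 \<le> a \<and> a \<le> n)"
  unfolding star_E_def by (auto simp: doubleton_eq_iff)

lemma star_path:
  assumes "is_path (star_V n) (star_E n) vs"
  shows "(\<exists>v\<le>n. vs = [v]) \<or> (\<exists>i. 1 \<le> i \<and> i \<le> n \<and> (vs = [0, i] \<or> vs = [i, 0]))
     \<or> (\<exists>i j. 1 \<le> i \<and> i \<le> n \<and> 1 \<le> j \<and> j \<le> n \<and> i \<noteq> j \<and> vs = [i, 0, j])"
proof -
  have ne: "vs \<noteq> []" and d: "distinct vs" and s: "set vs \<subseteq> {0..n}"
    and e: "\<And>i. Suc i < length vs \<Longrightarrow> {vs ! i, vs ! Suc i} \<in> star_E n"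
    using assms unfolding is_path_def star_V_def by auto
  show ?thesis
  proof (cases vs)
    case Nil then show ?thesis using ne by simp
  next
    case (Cons u r)
    show ?thesis
    proof (cases r)
      case Nil then show ?thesis using Cons s by auto
    next
      case (Cons v r2)
      note c1 = \<open>vs = u # r\<close> Cons
      have e0: "{u, v} \<in> star_E n" using e[of 0] c1 by simp
      show ?thesis
      proof (cases r2)
        case Nil then show ?thesis using c1 edge_char[OF e0] by auto
      next
        case (Cons w r3)
        have e1: "{v, w} \<in> star_E n" using e[of 1] c1 Cons by simp
        show ?thesis
        proof (cases r3)
          case Nil then show ?thesis using c1 Cons d edge_char[OF e0] edge_char[OF e1] by auto
        next
          case (Cons x r4)
          have e2: "{w, x} \<in> star_E n" using e[of 2] c1 \<open>r2 = w # r3\<close> Cons by (simp add: numeral_2_eq_2)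
          then show ?thesis using c1 \<open>r2 = w # r3\<close> Cons d edge_char[OF e0] edge_char[OF e2] by auto
        qed
      qed
    qed
  qed
qed

definition cvS :: "nat \<Rightarrow> nat \<Rightarrow> nat" where
  "cvS n v = (if v = 0 then 0 else v mod n + 1)"

lemma cvS_leaf: "n \<ge> 3 \<Longrightarrow> 1 \<le> i \<Longrightarrow> i \<le> n \<Longrightarrow> cvS n i \<noteq> 0 \<and> cvS n i \<noteq> i \<and> cvS n i \<le> n"
  unfolding cvS_def
  by (cases "i = n") (auto simp: Suc_le_eq)

lemma good:
  assumes "n \<ge> 3"
  shows "total_thue_colouring (star_V n) (star_E n) (cvS n) Max"
  unfolding total_thue_colouring_def
proof (intro allI impI)
  fix vs assume p: "is_path (star_V n) (star_E n) vs"
  have cz: "cvS n 0 = 0" by (simp add: cvS_def)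
  from star_path[OF p] show "nonrepetitive (total_seq (cvS n) Max vs) \<and>
        nonrepetitive (map (cvS n) vs) \<and> nonrepetitive (map Max (path_edges vs))"
  proof (elim disjE exE conjE)
    fix v assume "vs = [v]" then show ?thesis by (simp add: nr0 nr1)
  next
    fix i assume i: "1 \<le> i" "i \<le> n" and "vs = [0, i]"
    then show ?thesis using cvS_leaf[OF assms i] cz
      by (auto simp: nr1 nr2' nr3' insert_commute)
  next
    fix i assume i: "1 \<le> i" "i \<le> n" and "vs = [i, 0]"
    then show ?thesis using cvS_leaf[OF assms i] cz
      by (auto simp: nr1 nr2' nr3' insert_commute)
  next
    fix i j assume i: "1 \<le> i" "i \<le> n" and j: "1 \<le> j" "j \<le> n" and ij: "i \<noteq> j" and vs: "vs = [i, 0, j]"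
    have "nonrepetitive [cvS n i, i, 0, j, cvS n j]"
      using cvS_leaf[OF assms i] cvS_leaf[OF assms j] ij i j by (intro nr5') auto
    then show ?thesis using vs cvS_leaf[OF assms i] cvS_leaf[OF assms j] ij cz i j
      by (auto simp: nr2' nr3' insert_commute)
  qed
qed

lemma good_num:
  assumes "n \<ge> 3"
  shows "num_colours (star_V n) (star_E n) (cvS n) Max = n + 1"
proof -
  have "cvS n ` star_V n \<union> Max ` star_E n = {0..n}"
  proof
    show "cvS n ` star_V n \<union> Max ` star_E n \<subseteq> {0..n}"
      using cvS_leaf[OF assms] unfolding star_V_def star_E_def cvS_def
      by (auto simp: Suc_le_eq)
    show "{0..n} \<subseteq> cvS n ` star_V n \<union> Max ` star_E n"
    proof
      fix x assume x: "x \<in> {0..n}"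
      show "x \<in> cvS n ` star_V n \<union> Max ` star_E n"
      proof (cases "x = 0")
        case True then show ?thesis by (auto simp: star_V_def cvS_def intro!: image_eqI[of 0])
      next
        case False
        then have "{0, x} \<in> star_E n" using x unfolding star_E_def by auto
        moreover have "Max {0, x} = x" by simp
        ultimately show ?thesis by (metis UnI2 image_eqI)
      qed
    qed
  qed
  then show ?thesis unfolding num_colours_def by simp
qed

lemma lower:
  assumes "n \<ge> 3" and t: "total_thue_colouring (star_V n) (star_E n) cv ce"
  shows "n + 1 \<le> num_colours (star_V n) (star_E n) cv ce"
proof -
  define f where "f = (\<lambda>i. if i = 0 then cv 0 else ce {0, i})"
  have P: "\<And>vs. is_path (star_V n) (star_E n) vs \<Longrightarrow> nonrepetitive (total_seq cv ce vs) \<and>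
        nonrepetitive (map ce (path_edges vs))"
    using t unfolding total_thue_colouring_def by blast
  have inE: "\<And>i. 1 \<le> i \<Longrightarrow> i \<le> n \<Longrightarrow> {0, i} \<in> star_E n" unfolding star_E_def by auto
  have p2: "\<And>i. 1 \<le> i \<Longrightarrow> i \<le> n \<Longrightarrow> is_path (star_V n) (star_E n) [i, 0]"
    unfolding is_path_def star_V_def using inE by (auto simp: insert_commute less_Suc_eq)
  have p3: "\<And>i j. 1 \<le> i \<Longrightarrow> i \<le> n \<Longrightarrow> 1 \<le> j \<Longrightarrow> j \<le> n \<Longrightarrow> i \<noteq> j \<Longrightarrow>
     is_path (star_V n) (star_E n) [i, 0, j]"
    unfolding is_path_def star_V_def using inE
    by (auto simp: insert_commute less_Suc_eq nth_Cons split: nat.splits)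
  have inj: "inj_on f {0..n}"
  proof (rule inj_onI)
    fix i j assume i: "i \<in> {0..n}" and j: "j \<in> {0..n}" and fe: "f i = f j"
    show "i = j"
    proof (rule ccontr)
      assume ij: "i \<noteq> j"
      show False
      proof (cases "i = 0 \<or> j = 0")
        case True
        then obtain k where k: "1 \<le> k" "k \<le> n" "ce {0, k} = cv 0"
        proof (cases "i = 0")
          case True then show ?thesis using that[of j] j ij fe unfolding f_def by auto
        next
          case False then show ?thesis using that[of i] i \<open>i = 0 \<or> j = 0\<close> fe unfolding f_def by auto
        qed
        have "nonrepetitive [cv k, ce {k, 0}, cv 0]" using P[OF p2[OF k(1,2)]] by simp
        then show False using nr3 k(3) by (metis insert_commute)
      next
        case False
        then have "nonrepetitive [ce {i, 0}, ce {0, j}]"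
          using P[OF p3[of i j]] i j ij by auto
        then show False using nr2 fe False by (metis f_def insert_commute)
      qed
    qed
  qed
  have sub: "f ` {0..n} \<subseteq> cv ` star_V n \<union> ce ` star_E n"
    unfolding f_def star_V_def using inE by auto
  have fin: "finite (cv ` star_V n \<union> ce ` star_E n)"
    unfolding star_V_def star_E_def by auto
  have "card (f ` {0..n}) = n + 1" using card_image[OF inj] by simp
  then show ?thesis unfolding num_colours_def using card_mono[OF fin sub] by simp
qed

theorem theorem17:
  fixes n :: nat
  assumes "n + 1 \<ge> 4"
  shows "pi_T (star_V n) (star_E n) = n + 1"
  unfolding pi_T_def
proof (rule Least_equality)
  have n: "n \<ge> 3" using assms by simp
  show "\<exists>cv ce. total_thue_colouring (star_V n) (star_E n) cv ce \<and> num_colours (star_V n) (star_E n) cv ce = n + 1"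
    using good[OF n] good_num[OF n] by blast
  show "\<And>k. \<exists>cv ce. total_thue_colouring (star_V n) (star_E n) cv ce \<and> num_colours (star_V n) (star_E n) cv ce = k \<Longrightarrow> n + 1 \<le> k"
    using lower[OF n] by blast
qed

end
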